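(* Let $\Gamma$ be a group with centre $Z\Gamma$, and $G=\bigoplus_{\mathbf{Q}_2}\Gamma\rtimes V$ with $V$ acting by $(v\cdot a)(x)=a(v^{-1}x)$. For $v\in V$ let $p_v(x)=\log_2(v'(v^{-1}x))-\nu(x)+\nu(v^{-1}x)$, $x\in\mathbf{Q}_2$, and for $\zeta\in Z\Gamma$ let $c(\zeta)_v(x)=\zeta^{p_v(x)}$. Then $c(\zeta)$ takes values in $\bigoplus_{\mathbf{Q}_2}Z\Gamma$ and satisfies $c(\zeta)_{vw}=c(\zeta)_v\cdot c(\zeta)_w^v$ for all $v,w\in V$, where $c_w^v(x)=c_w(v^{-1}x)$. Moreover $E:Z\Gamma\to\mathrm{Aut}(G)$, $E_\zeta(av)=a\cdot c(\zeta)_v\cdot v$ ($a\in\bigoplus_{\mathbf{Q}_2}\Gamma$, $v\in V$), is a well-defined injective group morphism.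
   Context: Cantor space $\mathfrak C=\{0,1\}^{\mathbf N}$; $C_m=\{m\cdot x\}$. Thompson's group $V$: homeomorphisms $v$ with $v(m_kx)=m'_kx$ for partitions $\mathfrak C=\bigsqcup C_{m_k}=\bigsqcup C_{m'_k}$; slope $v'(x)=2^{|m_k|-|m'_k|}$ on $C_{m_k}$. $\mathbf{Q}_2\subset\mathfrak C$: eventually-zero sequences, identified with dyadic rationals of $[0,1)$ via $x\mapsto\sum_{n\ge1}x_n2^{-n}$. $\nu$ is the dyadic valuation on $\mathbf{Q}$: $\nu(0)=0$, $\nu(2^kp/q)=k$ for $p,q$ odd. $\bigoplus_{\mathbf{Q}_2}\Gamma$ denotes finitely supported maps $\mathbf{Q}_2\to\Gamma$. *)

theory Defs
  imports "HOL-Algebra.Algebra"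
begin

(* Cantor space {0,1}^N : infinite bit sequences (True = 1), indexed from 0 *)
type_synonym cantor = "nat \<Rightarrow> bool"

definition cat :: "bool list \<Rightarrow> cantor \<Rightarrow> cantor" where
  "cat m x = (\<lambda>n. if n < length m then m ! n else x (n - length m))"

definition cyl :: "bool list \<Rightarrow> cantor set" where
  "cyl m = range (cat m)"

definition is_cyl_partition :: "bool list list \<Rightarrow> bool" where
  "is_cyl_partition ms \<longleftrightarrow> (\<forall>x. \<exists>!k. k < length ms \<and> x \<in> cyl (ms ! k))"

definition describes :: "(cantor \<Rightarrow> cantor) \<Rightarrow> bool list list \<Rightarrow> bool list list \<Rightarrow> bool" where
  "describes v ms ms' \<longleftrightarrow> length ms = length ms' \<and> is_cyl_partition ms \<and> is_cyl_partition ms'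
     \<and> (\<forall>k < length ms. \<forall>x. v (cat (ms ! k) x) = cat (ms' ! k) x)"

definition thompsonV :: "(cantor \<Rightarrow> cantor) set" where
  "thompsonV = {v. \<exists>ms ms'. describes v ms ms'}"

(* log_2 of the slope v'(x) = 2^(|m_k| - |m'_k|) for x in C_{m_k} *)
definition log2_slope :: "(cantor \<Rightarrow> cantor) \<Rightarrow> cantor \<Rightarrow> int" where
  "log2_slope v x = (THE d. \<exists>ms ms' k. describes v ms ms' \<and> k < length ms \<and> x \<in> cyl (ms ! k)
        \<and> d = int (length (ms ! k)) - int (length (ms' ! k)))"

definition Q2 :: "cantor set" where
  "Q2 = {x. finite {n. x n}}"

(* identification with dyadic rationals: x |-> sum_{n>=1} x_n 2^{-n} (our index n corresponds to x_{n+1}) *)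
definition dyadic :: "cantor \<Rightarrow> rat" where
  "dyadic x = (\<Sum>n\<in>{n. x n}. (1/2) ^ Suc n)"

definition nu :: "rat \<Rightarrow> int" where
  "nu r = (if r = 0 then 0 else
     (THE k::int. \<exists>p q::int. odd p \<and> odd q \<and> r = 2 powi k * (of_int p / of_int q)))"

definition pexp :: "(cantor \<Rightarrow> cantor) \<Rightarrow> cantor \<Rightarrow> int" where
  "pexp v x = log2_slope v (inv_into UNIV v x) - nu (dyadic x) + nu (dyadic (inv_into UNIV v x))"

definition center :: "('g, 'b) monoid_scheme \<Rightarrow> 'g set" where
  "center \<Gamma> = {z \<in> carrier \<Gamma>. \<forall>g \<in> carrier \<Gamma>. z \<otimes>\<^bsub>\<Gamma>\<^esub> g = g \<otimes>\<^bsub>\<Gamma>\<^esub> z}"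

(* finitely supported maps Q_2 -> H (H a subset of Gamma), extended by 1 off Q_2 *)
definition dsumQ2 :: "('g, 'b) monoid_scheme \<Rightarrow> 'g set \<Rightarrow> (cantor \<Rightarrow> 'g) set" where
  "dsumQ2 \<Gamma> H = {a. (\<forall>x. a x \<in> H) \<and> (\<forall>x. x \<notin> Q2 \<longrightarrow> a x = \<one>\<^bsub>\<Gamma>\<^esub>)
                     \<and> finite {x. a x \<noteq> \<one>\<^bsub>\<Gamma>\<^esub>}}"

definition cocyc :: "('g, 'b) monoid_scheme \<Rightarrow> 'g \<Rightarrow> (cantor \<Rightarrow> cantor) \<Rightarrow> cantor \<Rightarrow> 'g" where
  "cocyc \<Gamma> \<zeta> v x = (if x \<in> Q2 then \<zeta> [^]\<^bsub>\<Gamma>\<^esub> pexp v x else \<one>\<^bsub>\<Gamma>\<^esub>)"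

(* G = (+)_{Q_2} Gamma x| V, element a v represented as the pair (a, v);
   (a v)(b w) = a (v.b) (v w) with (v.b)(x) = b(v^{-1} x) *)
definition semidir :: "('g, 'b) monoid_scheme \<Rightarrow> ((cantor \<Rightarrow> 'g) \<times> (cantor \<Rightarrow> cantor)) monoid" where
  "semidir \<Gamma> = \<lparr> carrier = dsumQ2 \<Gamma> (carrier \<Gamma>) \<times> thompsonV,
                 monoid.mult = (\<lambda>g h. ((\<lambda>x. fst g x \<otimes>\<^bsub>\<Gamma>\<^esub> fst h (inv_into UNIV (snd g) x)), snd g \<circ> snd h)),
                 monoid.one = ((\<lambda>x. \<one>\<^bsub>\<Gamma>\<^esub>), id) \<rparr>"

definition Emap :: "('g, 'b) monoid_scheme \<Rightarrow> 'g
     \<Rightarrow> ((cantor \<Rightarrow> 'g) \<times> (cantor \<Rightarrow> cantor)) \<Rightarrow> ((cantor \<Rightarrow> 'g) \<times> (cantor \<Rightarrow> cantor))" where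
  "Emap \<Gamma> \<zeta> = (\<lambda>g \<in> carrier (semidir \<Gamma>). ((\<lambda>x. fst g x \<otimes>\<^bsub>\<Gamma>\<^esub> cocyc \<Gamma> \<zeta> (snd g) x), snd g))"

end

theory Submission
  imports Defs "HOL-Library.Sublist"
begin


lemma cat_nth_lt: "n < length m \<Longrightarrow> cat m x n = m ! n" by (simp add: cat_def)
lemma cat_nth_ge: "cat m x (n + length m) = x n" by (simp add: cat_def)
lemma cat_Nil[simp]: "cat [] x = x" by (simp add: cat_def)
lemma cat_append: "cat (a @ b) y = cat a (cat b y)"
  by (auto simp: cat_def nth_append fun_eq_iff)

lemma cyl_iff: "x \<in> cyl m \<longleftrightarrow> (\<forall>i<length m. x i = m ! i)"
proof
  assume "x \<in> cyl m" then show "\<forall>i<length m. x i = m ! i" by (auto simp: cyl_def cat_def)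
next
  assume h: "\<forall>i<length m. x i = m ! i"
  have "x = cat m (\<lambda>n. x (n + length m))" using h by (auto simp: cat_def fun_eq_iff)
  then show "x \<in> cyl m" by (auto simp: cyl_def)
qed

definition shft :: "nat \<Rightarrow> cantor \<Rightarrow> cantor" where "shft k x = (\<lambda>n. x (n + k))"

lemma cyl_decomp: "x \<in> cyl m \<Longrightarrow> x = cat m (shft (length m) x)"
  by (auto simp: cyl_iff cat_def fun_eq_iff shft_def)

lemma cat_in_cyl[simp]: "cat m y \<in> cyl m" by (auto simp: cyl_def)

lemma shft_cat[simp]: "shft (length m) (cat m y) = y"
  by (auto simp: shft_def cat_def fun_eq_iff)

lemma cat_inj: "cat m y = cat m z \<Longrightarrow> y = z"
  by (metis shft_cat)

lemma cat_in_cyl_append: "cat a y \<in> cyl (a @ d) \<longleftrightarrow> y \<in> cyl d"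
  by (auto simp: cyl_iff cat_def nth_append)

lemma cat_in_cyl_prefix: "prefix b a \<Longrightarrow> cat a y \<in> cyl b"
  by (auto simp: cyl_iff cat_def prefix_def nth_append)

definition compat :: "bool list \<Rightarrow> bool list \<Rightarrow> bool" where
  "compat a b \<longleftrightarrow> prefix a b \<or> prefix b a"

lemma cyl_compat: "x \<in> cyl a \<Longrightarrow> x \<in> cyl b \<Longrightarrow> compat a b"
proof -
  assume a: "x \<in> cyl a" and b: "x \<in> cyl b"
  have "\<forall>i<length a. x i = a ! i" "\<forall>i<length b. x i = b ! i" using a b by (auto simp: cyl_iff)
  then show ?thesis
  proof (cases "length a \<le> length b")
    case True
    with \<open>\<forall>i<length a. x i = a ! i\<close> \<open>\<forall>i<length b. x i = b ! i\<close>
    have "a = take (length a) b" by (intro nth_equalityI) auto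
    then show ?thesis unfolding compat_def by (metis take_is_prefix)
  next
    case False
    with \<open>\<forall>i<length a. x i = a ! i\<close> \<open>\<forall>i<length b. x i = b ! i\<close>
    have "b = take (length b) a" by (intro nth_equalityI) auto
    then show ?thesis unfolding compat_def by (metis take_is_prefix)
  qed
qed

lemma compat_sym: "compat a b = compat b a" by (auto simp: compat_def)

lemma compat_cyl: "compat m' n \<Longrightarrow> cat m y \<in> cyl (m @ drop (length m') n) \<longleftrightarrow> cat m' y \<in> cyl n"
  unfolding compat_def
proof (elim disjE)
  assume "prefix m' n"
  then obtain d where n: "n = m' @ d" by (auto simp: prefix_def)
  show ?thesis by (simp add: n cat_in_cyl_append)
next
  assume p: "prefix n m'"
  then have "drop (length m') n = []" by (simp add: prefix_length_le)
  then show ?thesis using p by (simp add: cat_in_cyl_prefix)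
qed

lemma cat_same_len: "(\<And>y. cat a y = cat b y) \<Longrightarrow> length a = length b"
proof (rule ccontr)
  assume h: "\<And>y. cat a y = cat b y" and ne: "length a \<noteq> length b"
  show False
  proof (cases "length a < length b")
    case True
    have "cat a (\<lambda>_. \<not> b ! length a) (0 + length a) = cat b (\<lambda>_. \<not> b ! length a) (length a)"
      using h by simp
    then show False using True by (simp only: cat_nth_ge cat_nth_lt) simp
  next
    case False
    then have lt: "length b < length a" using ne by simp
    have "cat b (\<lambda>_. \<not> a ! length b) (0 + length b) = cat a (\<lambda>_. \<not> a ! length b) (length b)"
      using h by simp
    then show False using lt by (simp only: cat_nth_ge cat_nth_lt) simp
  qed
qed

definition locp :: "(cantor \<Rightarrow> cantor) \<Rightarrow> bool list \<Rightarrow> bool list \<Rightarrow> bool" where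
  "locp v m m' \<longleftrightarrow> (\<forall>y. v (cat m y) = cat m' y)"

lemma describes_locp: "describes v ms ms' \<Longrightarrow> k < length ms \<Longrightarrow> locp v (ms ! k) (ms' ! k)"
  by (simp add: describes_def locp_def)

lemma part_ex: "is_cyl_partition ms \<Longrightarrow> \<exists>k<length ms. x \<in> cyl (ms ! k)"
  unfolding is_cyl_partition_def by blast

lemma part_uniq: "is_cyl_partition ms \<Longrightarrow> k<length ms \<Longrightarrow> x \<in> cyl (ms ! k) \<Longrightarrow>
   k'<length ms \<Longrightarrow> x \<in> cyl (ms ! k') \<Longrightarrow> k = k'"
  unfolding is_cyl_partition_def by blast

lemma part_map: assumes "distinct P" "\<And>x. \<exists>!p. p \<in> set P \<and> x \<in> cyl (f p)"
  shows "is_cyl_partition (map f P)"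
  unfolding is_cyl_partition_def
proof
  fix x
  obtain p where p: "p \<in> set P" "x \<in> cyl (f p)" using assms(2) by blast
  then obtain k where k: "k < length P" "P ! k = p" by (auto simp: in_set_conv_nth)
  show "\<exists>!k. k < length (map f P) \<and> x \<in> cyl (map f P ! k)"
  proof (rule ex1I[of _ k])
    show "k < length (map f P) \<and> x \<in> cyl (map f P ! k)" using k p by auto
  next
    fix k' assume "k' < length (map f P) \<and> x \<in> cyl (map f P ! k')"
    then have h: "k' < length P" "x \<in> cyl (f (P ! k'))" by auto
    then have "P ! k' = P ! k" using assms(2) k p by (metis nth_mem)
    then show "k' = k" using assms(1) h k by (metis nth_eq_iff_index_eq)
  qed
qed

lemma V_local: assumes "v \<in> thompsonV" shows "\<exists>m m'. x \<in> cyl m \<and> locp v m m'"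
proof -
  obtain ms ms' where d: "describes v ms ms'" using assms by (auto simp: thompsonV_def)
  then have "is_cyl_partition ms" by (simp add: describes_def)
  then obtain k where "k < length ms" "x \<in> cyl (ms ! k)" using part_ex by blast
  then show ?thesis using describes_locp[OF d] by blast
qed

lemma V_local_img: assumes "v \<in> thompsonV" shows "\<exists>m m' y. x = cat m' y \<and> locp v m m'"
proof -
  obtain ms ms' where d: "describes v ms ms'" using assms by (auto simp: thompsonV_def)
  then have "is_cyl_partition ms'" by (simp add: describes_def)
  then obtain k where "k < length ms'" "x \<in> cyl (ms' ! k)" using part_ex by blast
  moreover have "length ms = length ms'" using d by (simp add: describes_def)
  ultimately show ?thesis using describes_locp[OF d, of k] cyl_decomp by metis
qed

lemma V_inj: assumes "v \<in> thompsonV" shows "inj v"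
proof (rule injI)
  fix a b assume e: "v a = v b"
  obtain ms ms' where d: "describes v ms ms'" using assms by (auto simp: thompsonV_def)
  then have p: "is_cyl_partition ms" "is_cyl_partition ms'" "length ms = length ms'"
    by (auto simp: describes_def)
  obtain k where k: "k < length ms" "a \<in> cyl (ms ! k)" using part_ex p by blast
  obtain k' where k': "k' < length ms" "b \<in> cyl (ms ! k')" using part_ex p by blast
  have a: "v a = cat (ms' ! k) (shft (length (ms ! k)) a)"
    using describes_locp[OF d k(1)] cyl_decomp[OF k(2)] unfolding locp_def by metis
  have b: "v b = cat (ms' ! k') (shft (length (ms ! k')) b)"
    using describes_locp[OF d k'(1)] cyl_decomp[OF k'(2)] unfolding locp_def by metis
  have "v a \<in> cyl (ms' ! k)" "v a \<in> cyl (ms' ! k')" using a b e by (metis cat_in_cyl)+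
  then have "k = k'" using part_uniq[OF p(2), of k "v a" k'] k k' p(3) by simp
  then show "a = b" using a b e cyl_decomp k k' by (metis cat_inj)
qed

lemma V_surj: assumes "v \<in> thompsonV" shows "surj v"
proof -
  { fix x
    obtain m m' y where "x = cat m' y" "locp v m m'" using V_local_img[OF assms] by blast
    then have "x \<in> range v" unfolding locp_def by (metis rangeI) }
  then show ?thesis by blast
qed

lemma V_bij: "v \<in> thompsonV \<Longrightarrow> bij v" using V_inj V_surj by (simp add: bij_def)

lemma locp_uniq: assumes "locp v m m'" "locp v n n'" "x \<in> cyl m" "x \<in> cyl n"
  shows "int (length m) - int (length m') = int (length n) - int (length n')"
proof -
  have "compat m n" using cyl_compat assms by blast
  { fix m m' n n' assume l1: "locp v m m'" and l2: "locp v n n'" and pr: "prefix m n"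
    then obtain u where n: "n = m @ u" by (auto simp: prefix_def)
    have "\<And>y. cat n' y = cat (m' @ u) y"
      using l1 l2 unfolding locp_def n cat_append by metis
    then have "length n' = length (m' @ u)" by (rule cat_same_len)
    then have "int (length m) - int (length m') = int (length n) - int (length n')"
      using n by simp }
  then show ?thesis using assms \<open>compat m n\<close> unfolding compat_def by metis
qed

lemma slope_eq: assumes "v \<in> thompsonV" "x \<in> cyl m" "locp v m m'"
  shows "log2_slope v x = int (length m) - int (length m')"
  unfolding log2_slope_def
proof (rule the_equality)
  obtain ms ms' where d: "describes v ms ms'" using assms by (auto simp: thompsonV_def)
  then have "is_cyl_partition ms" by (simp add: describes_def)
  then obtain k where k: "k < length ms" "x \<in> cyl (ms ! k)" using part_ex by blast
  have "int (length (ms ! k)) - int (length (ms' ! k)) = int (length m) - int (length m')"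
    using locp_uniq[OF describes_locp[OF d k(1)] assms(3) k(2) assms(2)] .
  then show "\<exists>ms ms' k. describes v ms ms' \<and> k < length ms \<and> x \<in> cyl (ms ! k) \<and>
      int (length m) - int (length m') = int (length (ms ! k)) - int (length (ms' ! k))"
    using d k by metis
next
  fix d assume "\<exists>ms ms' k. describes v ms ms' \<and> k < length ms \<and> x \<in> cyl (ms ! k) \<and>
      d = int (length (ms ! k)) - int (length (ms' ! k))"
  then show "d = int (length m) - int (length m')"
    using locp_uniq describes_locp assms by metis
qed

lemma locp_comp: assumes w: "locp w m m'" and v: "locp v n n'" and c: "compat m' n"
  shows "locp (v \<circ> w) (m @ drop (length m') n) (n' @ drop (length n) m')"
  using c unfolding compat_def
proof (elim disjE)
  assume "prefix m' n"
  then obtain d where n: "n = m' @ d" by (auto simp: prefix_def)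
  have "drop (length n) m' = []" using n by simp
  then show ?thesis using w v unfolding locp_def n by (simp add: cat_append)
next
  assume "prefix n m'"
  then obtain e where m': "m' = n @ e" by (auto simp: prefix_def)
  have "drop (length m') n = []" using m' by simp
  then show ?thesis using w v unfolding locp_def m' by (simp add: cat_append)
qed

lemma locp_comp_mem: assumes "locp w m m'" "x \<in> cyl m" "w x \<in> cyl n" "compat m' n"
  shows "x \<in> cyl (m @ drop (length m') n)"
proof -
  have x: "x = cat m (shft (length m) x)" using assms(2) by (rule cyl_decomp)
  have "w x = cat m' (shft (length m) x)" using assms(1) x unfolding locp_def by metis
  then show ?thesis using compat_cyl[OF assms(4)] assms(3) x by metis
qed

lemma V_comp: assumes v: "v \<in> thompsonV" and w: "w \<in> thompsonV" shows "v \<circ> w \<in> thompsonV"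
proof -
  obtain ns ns' where dv: "describes v ns ns'" using v by (auto simp: thompsonV_def)
  obtain ms ms' where dw: "describes w ms ms'" using w by (auto simp: thompsonV_def)
  have pv: "is_cyl_partition ns" "is_cyl_partition ns'" "length ns = length ns'"
    using dv by (auto simp: describes_def)
  have pw: "is_cyl_partition ms" "is_cyl_partition ms'" "length ms = length ms'"
    using dw by (auto simp: describes_def)
  define P where "P = filter (\<lambda>(k,j). compat (ms'!k) (ns!j)) (List.product [0..<length ms] [0..<length ns])"
  define dm where "dm = (\<lambda>(k,j). ms!k @ drop (length (ms'!k)) (ns!j))"
  define rn where "rn = (\<lambda>(k,j). ns'!j @ drop (length (ns!j)) (ms'!k))"
  have dP: "distinct P" unfolding P_def by (simp add: distinct_product)
  have sP: "\<And>k j. (k,j) \<in> set P \<longleftrightarrow> k < length ms \<and> j < length ns \<and> compat (ms'!k) (ns!j)"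
    unfolding P_def by auto
  have lw: "\<And>k. k < length ms \<Longrightarrow> locp w (ms!k) (ms'!k)" using describes_locp[OF dw] by blast
  have lv: "\<And>j. j < length ns \<Longrightarrow> locp v (ns!j) (ns'!j)" using describes_locp[OF dv] by blast
  have part1: "is_cyl_partition (map dm P)"
  proof (rule part_map[OF dP])
    fix x
    obtain k where k: "k < length ms" "x \<in> cyl (ms!k)" using part_ex[OF pw(1)] by blast
    obtain j where j: "j < length ns" "w x \<in> cyl (ns!j)" using part_ex[OF pv(1)] by blast
    have x: "x = cat (ms!k) (shft (length (ms!k)) x)" using k(2) by (rule cyl_decomp)
    have wx: "w x = cat (ms'!k) (shft (length (ms!k)) x)" using lw[OF k(1)] x unfolding locp_def by metis
    have c: "compat (ms'!k) (ns!j)" using cyl_compat[OF _ j(2)] wx by (metis cat_in_cyl)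
    show "\<exists>!p. p \<in> set P \<and> x \<in> cyl (dm p)"
    proof (rule ex1I[of _ "(k,j)"])
      show "(k,j) \<in> set P \<and> x \<in> cyl (dm (k,j))"
        using sP k j c locp_comp_mem[OF lw[OF k(1)] k(2) j(2) c] by (simp add: dm_def)
    next
      fix p assume h: "p \<in> set P \<and> x \<in> cyl (dm p)"
      obtain k' j' where p: "p = (k',j')" by (cases p)
      have h': "k' < length ms" "j' < length ns" "compat (ms'!k') (ns!j')" "x \<in> cyl (ms!k' @ drop (length (ms'!k')) (ns!j'))"
        using h sP p dm_def by auto
      have "x \<in> cyl (ms!k')" using h'(4) by (auto simp: cyl_iff nth_append)
      then have kk: "k' = k" using part_uniq[OF pw(1)] k h'(1) by blast
      have "w x \<in> cyl (ns!j')" using compat_cyl[OF h'(3)] h'(4) x wx kk by metis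
      then have "j' = j" using part_uniq[OF pv(1)] j h'(2) by blast
      then show "p = (k,j)" using kk p by simp
    qed
  qed
  have part2: "is_cyl_partition (map rn P)"
  proof (rule part_map[OF dP])
    fix z
    obtain j where j: "j < length ns" "z \<in> cyl (ns'!j)" using part_ex[OF pv(2)] pv(3) by metis
    define y where "y = shft (length (ns'!j)) z"
    have z: "z = cat (ns'!j) y" using j(2) cyl_decomp y_def by blast
    obtain k where k: "k < length ms" "cat (ns!j) y \<in> cyl (ms'!k)" using part_ex[OF pw(2)] pw(3) by metis
    have c: "compat (ms'!k) (ns!j)" using cyl_compat[OF k(2)] by (metis cat_in_cyl)
    show "\<exists>!p. p \<in> set P \<and> z \<in> cyl (rn p)"
    proof (rule ex1I[of _ "(k,j)"])
      have "z \<in> cyl (ns'!j @ drop (length (ns!j)) (ms'!k))"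
        using compat_cyl[of "ns!j" "ms'!k" "ns'!j" y] c k(2) z by (simp add: compat_sym)
      then show "(k,j) \<in> set P \<and> z \<in> cyl (rn (k,j))"
        using sP k j c by (simp add: rn_def)
    next
      fix p assume h: "p \<in> set P \<and> z \<in> cyl (rn p)"
      obtain k' j' where p: "p = (k',j')" by (cases p)
      have h': "k' < length ms" "j' < length ns" "compat (ms'!k') (ns!j')" "z \<in> cyl (ns'!j' @ drop (length (ns!j')) (ms'!k'))"
        using h sP p rn_def by auto
      have "z \<in> cyl (ns'!j')" using h'(4) by (auto simp: cyl_iff nth_append)
      then have jj: "j' = j" using part_uniq[OF pv(2)] j h'(2) pv(3) by metis
      have "cat (ns!j) y \<in> cyl (ms'!k')"
        using compat_cyl[of "ns!j" "ms'!k'" "ns'!j" y] h'(3,4) z jj by (simp add: compat_sym)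
      then have "k' = k" using part_uniq[OF pw(2)] k h'(1) pw(3) by metis
      then show "p = (k,j)" using jj p by simp
    qed
  qed
  have "describes (v \<circ> w) (map dm P) (map rn P)"
    unfolding describes_def
  proof (intro conjI part1 part2 allI impI)
    show "length (map dm P) = length (map rn P)" by simp
  next
    fix i x assume i: "i < length (map dm P)"
    obtain k j where p: "P ! i = (k,j)" by (cases "P ! i")
    have "(k,j) \<in> set P" using i p by (metis length_map nth_mem)
    then have "k < length ms" "j < length ns" "compat (ms'!k) (ns!j)" using sP by auto
    then have "locp (v \<circ> w) (dm (k,j)) (rn (k,j))"
      unfolding dm_def rn_def using locp_comp lw lv by simp
    then show "(v \<circ> w) (cat (map dm P ! i) x) = cat (map rn P ! i) x"
      using i p by (simp add: locp_def)
  qed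
  then show ?thesis by (auto simp: thompsonV_def)
qed



lemma powi_uniq_aux: fixes p q p' q' :: int
  assumes "odd p" "odd q" "odd p'" "odd q'" "k < k'"
  shows "(2::rat) powi k * (of_int p / of_int q) \<noteq> 2 powi k' * (of_int p' / of_int q')"
proof
  assume e: "(2::rat) powi k * (of_int p / of_int q) = 2 powi k' * (of_int p' / of_int q')"
  have qn: "q \<noteq> 0" "q' \<noteq> 0" using assms by auto
  have "(2::rat) powi k' = 2 powi k * 2 powi (k' - k)" by (simp add: power_int_add[symmetric])
  also have "(2::rat) powi (k' - k) = 2 ^ nat (k' - k)" using assms(5) by (simp add: power_int_def)
  finally have "(2::rat) powi k * (of_int p / of_int q) = 2 powi k * (2 ^ nat (k' - k) * (of_int p' / of_int q'))"
    using e by simp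
  moreover have "(2::rat) powi k \<noteq> 0" by simp
  ultimately have "(of_int p / of_int q :: rat) = 2 ^ nat (k' - k) * (of_int p' / of_int q')"
    by (metis mult_left_cancel)
  then have "(of_int (p * q') :: rat) = of_int (2 ^ nat (k' - k) * p' * q)"
    using qn by (simp add: field_simps)
  then have i: "p * q' = 2 ^ nat (k' - k) * p' * q" by (simp only: of_int_eq_iff)
  have "even ((2::int) ^ nat (k' - k))" using assms(5) by simp
  then have "even (p * q')" using i by simp
  then show False using assms by simp
qed

lemma nu_eq: fixes p q :: int assumes "odd p" "odd q"
  shows "nu (2 powi k * (of_int p / of_int q)) = k"
proof -
  have ne: "(2::rat) powi k * (of_int p / of_int q) \<noteq> 0" using assms by auto
  have "(THE k'::int. \<exists>p' q'::int. odd p' \<and> odd q' \<and> 2 powi k * (of_int p / of_int q) = (2::rat) powi k' * (of_int p' / of_int q')) = k"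
  proof (rule the_equality)
    show "\<exists>p' q'::int. odd p' \<and> odd q' \<and> 2 powi k * (of_int p / of_int q) = (2::rat) powi k * (of_int p' / of_int q')"
      using assms by blast
  next
    fix k' assume "\<exists>p' q'::int. odd p' \<and> odd q' \<and> 2 powi k * (of_int p / of_int q) = (2::rat) powi k' * (of_int p' / of_int q')"
    then obtain p' q' :: int where h: "odd p'" "odd q'" "2 powi k * (of_int p / of_int q) = (2::rat) powi k' * (of_int p' / of_int q')" by blast
    show "k' = k"
    proof (rule ccontr)
      assume "k' \<noteq> k"
      then consider "k < k'" | "k' < k" by linarith
      then show False
        using powi_uniq_aux[OF assms h(1,2)] powi_uniq_aux[OF h(1,2) assms] h(3) by metis
    qed
  qed
  then show ?thesis using ne by (simp add: nu_def)
qed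

lemma nu_zero: "nu 0 = 0" by (simp add: nu_def)

lemma half_pow_mult: "j \<le> n \<Longrightarrow> ((1::rat)/2) ^ j * 2 ^ n = 2 ^ (n - j)"
proof -
  assume "j \<le> n"
  then have "(2::rat) ^ n = 2 ^ j * 2 ^ (n - j)" by (simp add: power_add[symmetric])
  then show ?thesis by (simp add: power_divide)
qed

lemma dy_cat: assumes fin: "finite {n. y n}"
  shows "\<exists>A::int. dyadic (cat u y) * 2 ^ length u = of_int A + dyadic y"
proof -
  define I where "I = {i. i < length u \<and> u ! i}"
  define Y where "Y = {n. y n}"
  have split: "{n. cat u y n} = I \<union> (\<lambda>n. n + length u) ` Y"
  proof (intro equalityI subsetI)
    fix n assume "n \<in> {n. cat u y n}"
    then have c: "cat u y n" by simp
    show "n \<in> I \<union> (\<lambda>n. n + length u) ` Y"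
    proof (cases "n < length u")
      case True then show ?thesis using c by (simp add: I_def cat_def)
    next
      case False
      then have "n = (n - length u) + length u" "y (n - length u)" using c by (auto simp: cat_def)
      then show ?thesis unfolding Y_def by blast
    qed
  next
    fix n assume "n \<in> I \<union> (\<lambda>n. n + length u) ` Y"
    then show "n \<in> {n. cat u y n}" by (auto simp: I_def Y_def cat_def)
  qed
  have fI: "finite I" unfolding I_def by simp
  have fY: "finite ((\<lambda>n. n + length u) ` Y)" using fin Y_def by simp
  have dj: "I \<inter> (\<lambda>n. n + length u) ` Y = {}" unfolding I_def by auto
  have "dyadic (cat u y) = (\<Sum>n\<in>I. (1/2) ^ Suc n) + (\<Sum>n\<in>(\<lambda>n. n + length u) ` Y. (1/2) ^ Suc n)"
    unfolding dyadic_def split using sum.union_disjoint[OF fI fY dj] by simp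
  also have "(\<Sum>n\<in>(\<lambda>n. n + length u) ` Y. ((1::rat)/2) ^ Suc n) = (\<Sum>n\<in>Y. (1/2) ^ Suc (n + length u))"
    by (subst sum.reindex) (auto simp: inj_on_def)
  also have "\<dots> = (1/2) ^ length u * dyadic y"
    unfolding dyadic_def Y_def by (simp add: sum_distrib_left power_add mult_ac)
  finally have e: "dyadic (cat u y) * 2 ^ length u = (\<Sum>n\<in>I. (1/2) ^ Suc n) * 2 ^ length u + dyadic y"
    by (simp add: algebra_simps power_divide)
  have "(\<Sum>n\<in>I. ((1::rat)/2) ^ Suc n) * 2 ^ length u = (\<Sum>n\<in>I. 2 ^ (length u - Suc n))"
    unfolding sum_distrib_right
    by (rule sum.cong, simp, rule half_pow_mult, simp add: I_def)
  also have "\<dots> = of_int (\<Sum>n\<in>I. 2 ^ (length u - Suc n))" by simp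
  finally show ?thesis using e by metis
qed

lemma dy_odd: assumes fin: "finite {n. y n}" and ne: "{n. y n} \<noteq> {}"
  shows "\<exists>B::int. dyadic y * 2 ^ Suc (Max {n. y n}) = of_int (2 * B + 1)"
proof -
  define S where "S = {n. y n}"
  define N where "N = Max S"
  have NS: "N \<in> S" unfolding N_def S_def by (rule Max_in[OF fin ne])
  have le: "\<And>n. n \<in> S \<Longrightarrow> n \<le> N" using fin by (simp add: N_def S_def)
  have fS: "finite (S - {N})" using fin S_def by simp
  have "dyadic y = (1/2) ^ Suc N + (\<Sum>n\<in>S - {N}. (1/2) ^ Suc n)"
    unfolding dyadic_def S_def[symmetric] using NS fin S_def by (simp add: sum.remove)
  then have "dyadic y * 2 ^ Suc N = (1/2) ^ Suc N * 2 ^ Suc N + (\<Sum>n\<in>S - {N}. (1/2) ^ Suc n) * 2 ^ Suc N"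
    by (simp only: distrib_right)
  also have "((1::rat)/2) ^ Suc N * 2 ^ Suc N = 1" using half_pow_mult[of "Suc N" "Suc N"] by simp
  finally have "dyadic y * 2 ^ Suc N = 1 + (\<Sum>n\<in>S - {N}. (1/2) ^ Suc n * 2 ^ Suc N)"
    by (simp only: sum_distrib_right)
  also have "(\<Sum>n\<in>S - {N}. ((1::rat)/2) ^ Suc n * 2 ^ Suc N) = (\<Sum>n\<in>S - {N}. 2 * 2 ^ (N - Suc n))"
  proof (rule sum.cong)
    fix n assume n: "n \<in> S - {N}"
    then have "n < N" using le by force
    then have "((1::rat)/2) ^ Suc n * 2 ^ Suc N = 2 ^ (Suc N - Suc n)" by (intro half_pow_mult) simp
    also have "Suc N - Suc n = Suc (N - Suc n)" using \<open>n < N\<close> by simp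
    finally show "((1::rat)/2) ^ Suc n * 2 ^ Suc N = 2 * 2 ^ (N - Suc n)" by simp
  qed simp
  also have "\<dots> = of_int (2 * (\<Sum>n\<in>S - {N}. 2 ^ (N - Suc n)))" by (simp add: sum_distrib_left)
  finally show ?thesis unfolding N_def S_def by (metis add.commute of_int_1 of_int_add)
qed

lemma nu_dyadic_cat: assumes fin: "finite {n. y n}" and ne: "{n. y n} \<noteq> {}"
  shows "nu (dyadic (cat u y)) = - int (length u + Suc (Max {n. y n}))"
proof -
  define N where "N = Max {n. y n}"
  obtain A :: int where A: "dyadic (cat u y) * 2 ^ length u = of_int A + dyadic y" using dy_cat[OF fin] by blast
  obtain B :: int where B: "dyadic y * 2 ^ Suc N = of_int (2 * B + 1)" using dy_odd[OF fin ne] N_def by blast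
  have "dyadic (cat u y) * 2 ^ length u * 2 ^ Suc N = of_int A * 2 ^ Suc N + of_int (2 * B + 1)"
    using A B by (simp add: algebra_simps)
  then have e: "dyadic (cat u y) * 2 ^ (length u + Suc N) = of_int (A * 2 ^ Suc N + 2 * B + 1)"
    by (simp add: power_add mult_ac)
  define M where "M = length u + Suc N"
  define c where "c = A * 2 ^ Suc N + 2 * B + 1"
  have e2: "dyadic (cat u y) = of_int c / 2 ^ M" using e unfolding M_def c_def by (simp add: eq_divide_eq)
  have p: "(2::rat) powi (- int M) * (of_int c / of_int 1) = of_int c / 2 ^ M"
    by (simp add: power_int_minus power_int_of_nat divide_inverse mult.commute)
  have "odd c" unfolding c_def by simp
  then have "nu ((2::rat) powi (- int M) * (of_int c / of_int 1)) = - int M" by (intro nu_eq) auto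
  then show ?thesis using e2 p unfolding M_def N_def by simp
qed



lemma Q2_cat: "cat m y \<in> Q2 \<longleftrightarrow> y \<in> Q2"
proof
  assume "cat m y \<in> Q2"
  then have "finite ((\<lambda>n. n + length m) -` {n. cat m y n})" unfolding Q2_def
    by (intro finite_vimageI) (auto simp: inj_on_def)
  moreover have "(\<lambda>n. n + length m) -` {n. cat m y n} = {n. y n}" by (auto simp: cat_def)
  ultimately show "y \<in> Q2" by (simp add: Q2_def)
next
  assume "y \<in> Q2"
  then have "finite ({..<length m} \<union> (\<lambda>n. n + length m) ` {n. y n})" by (simp add: Q2_def)
  moreover have "{n. cat m y n} \<subseteq> {..<length m} \<union> (\<lambda>n. n + length m) ` {n. y n}"
  proof
    fix n assume "n \<in> {n. cat m y n}"
    then show "n \<in> {..<length m} \<union> (\<lambda>n. n + length m) ` {n. y n}"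
      by (cases "n < length m") (auto simp: cat_def image_iff intro!: exI[of _ "n - length m"])
  qed
  ultimately show "cat m y \<in> Q2" unfolding Q2_def by (simp add: finite_subset)
qed

lemma V_Q2: assumes "v \<in> thompsonV" shows "v x \<in> Q2 \<longleftrightarrow> x \<in> Q2"
proof -
  obtain m m' where "x \<in> cyl m" "locp v m m'" using V_local[OF assms] by blast
  then have "x = cat m (shft (length m) x)" "v x = cat m' (shft (length m) x)"
    using cyl_decomp unfolding locp_def by metis+
  then show ?thesis using Q2_cat by metis
qed

lemma V_inv_Q2: assumes "v \<in> thompsonV" shows "inv_into UNIV v x \<in> Q2 \<longleftrightarrow> x \<in> Q2"
  using V_Q2[OF assms, of "inv_into UNIV v x"] V_surj[OF assms] by (simp add: f_inv_into_f)

lemma V_inv_cat: assumes "v \<in> thompsonV" "locp v m m'" shows "inv_into UNIV v (cat m' y) = cat m y"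
  using assms V_inj unfolding locp_def by (metis inv_into_f_f UNIV_I)

lemma pexp_finite: assumes v: "v \<in> thompsonV" shows "finite {x \<in> Q2. pexp v x \<noteq> 0}"
proof -
  obtain ms ms' where d: "describes v ms ms'" using v by (auto simp: thompsonV_def)
  have p: "is_cyl_partition ms'" "length ms = length ms'" using d by (auto simp: describes_def)
  have "{x \<in> Q2. pexp v x \<noteq> 0} \<subseteq> (\<lambda>m'. cat m' (\<lambda>_. False)) ` set ms'"
  proof
    fix x assume x: "x \<in> {x \<in> Q2. pexp v x \<noteq> 0}"
    obtain k where k: "k < length ms'" "x \<in> cyl (ms' ! k)" using part_ex[OF p(1)] by blast
    define m where "m = ms ! k"
    define m' where "m' = ms' ! k"
    define y where "y = shft (length m') x"
    have l: "locp v m m'" using describes_locp[OF d] k p m_def m'_def by simp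
    have xe: "x = cat m' y" using cyl_decomp k m'_def y_def by blast
    have yQ: "y \<in> Q2" using x xe Q2_cat by blast
    show "x \<in> (\<lambda>m'. cat m' (\<lambda>_. False)) ` set ms'"
    proof (cases "{n. y n} = {}")
      case True
      then have "y = (\<lambda>_. False)" by auto
      then show ?thesis using xe k m'_def by auto
    next
      case False
      have fin: "finite {n. y n}" using yQ by (simp add: Q2_def)
      have iv: "inv_into UNIV v x = cat m y" using V_inv_cat[OF v l] xe by simp
      have "pexp v x = (int (length m) - int (length m')) - nu (dyadic (cat m' y)) + nu (dyadic (cat m y))"
        unfolding pexp_def iv using slope_eq[OF v _ l] xe by simp
      also have "\<dots> = 0" using nu_dyadic_cat[OF fin False] by simp
      finally show ?thesis using x by simp
    qed
  qed
  then show ?thesis by (rule finite_subset) simp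
qed

lemma slope_chain: assumes v: "v \<in> thompsonV" and w: "w \<in> thompsonV"
  shows "log2_slope (v \<circ> w) y = log2_slope v (w y) + log2_slope w y"
proof -
  obtain m m' where m: "y \<in> cyl m" "locp w m m'" using V_local[OF w] by blast
  obtain n n' where n: "w y \<in> cyl n" "locp v n n'" using V_local[OF v] by blast
  have "w y = cat m' (shft (length m) y)" using m cyl_decomp unfolding locp_def by metis
  then have "w y \<in> cyl m'" by simp
  then have c: "compat m' n" using cyl_compat n by blast
  have "log2_slope (v \<circ> w) y = int (length (m @ drop (length m') n)) - int (length (n' @ drop (length n) m'))"
    using slope_eq[OF V_comp[OF v w] locp_comp_mem[OF m(2) m(1) n(1) c] locp_comp[OF m(2) n(2) c]] .
  also have "\<dots> = (int (length n) - int (length n')) + (int (length m) - int (length m'))"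
    using c unfolding compat_def by (auto dest: prefix_length_le)
  finally show ?thesis using slope_eq[OF v n(1,2)] slope_eq[OF w m] by simp
qed

lemma inv_comp: assumes v: "v \<in> thompsonV" and w: "w \<in> thompsonV"
  shows "inv_into UNIV (v \<circ> w) x = inv_into UNIV w (inv_into UNIV v x)"
  using o_inv_distrib[OF V_bij[OF v] V_bij[OF w]] by (metis comp_apply)

lemma pexp_comp: assumes v: "v \<in> thompsonV" and w: "w \<in> thompsonV"
  shows "pexp (v \<circ> w) x = pexp v x + pexp w (inv_into UNIV v x)"
proof -
  have "w (inv_into UNIV w (inv_into UNIV v x)) = inv_into UNIV v x"
    using V_surj[OF w] by (simp add: f_inv_into_f)
  then show ?thesis unfolding pexp_def inv_comp[OF v w] slope_chain[OF v w] by simp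
qed



abbreviation vinv :: "(cantor \<Rightarrow> cantor) \<Rightarrow> cantor \<Rightarrow> cantor" where "vinv v \<equiv> inv_into UNIV v"

definition sw :: "cantor \<Rightarrow> cantor" where "sw x = (\<lambda>n. if n = 0 then \<not> x 0 else x n)"

lemma cyl_single: "x \<in> cyl [b] \<longleftrightarrow> x 0 = b" by (simp add: cyl_iff)

lemma sw_locp: "locp sw [True] [False]" "locp sw [False] [True]"
  by (auto simp: locp_def sw_def cat_def fun_eq_iff)

lemma sw_V: "sw \<in> thompsonV"
proof -
  have p1: "is_cyl_partition [[False],[True]]" unfolding is_cyl_partition_def
  proof
    fix x :: cantor
    show "\<exists>!k. k < length [[False],[True]] \<and> x \<in> cyl ([[False],[True]] ! k)"
    proof (cases "x 0")
      case True then show ?thesis by (intro ex1I[of _ 1]) (auto simp: cyl_single less_Suc_eq)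
    next
      case False then show ?thesis by (intro ex1I[of _ 0]) (auto simp: cyl_single less_Suc_eq)
    qed
  qed
  have p2: "is_cyl_partition [[True],[False]]" unfolding is_cyl_partition_def
  proof
    fix x :: cantor
    show "\<exists>!k. k < length [[True],[False]] \<and> x \<in> cyl ([[True],[False]] ! k)"
    proof (cases "x 0")
      case True then show ?thesis by (intro ex1I[of _ 0]) (auto simp: cyl_single less_Suc_eq)
    next
      case False then show ?thesis by (intro ex1I[of _ 1]) (auto simp: cyl_single less_Suc_eq)
    qed
  qed
  have "describes sw [[False],[True]] [[True],[False]]" unfolding describes_def
    using p1 p2 sw_locp by (auto simp: less_Suc_eq locp_def)
  then show ?thesis by (auto simp: thompsonV_def)
qed

definition zr :: cantor where "zr = (\<lambda>_. False)"

lemma zr_Q2: "zr \<in> Q2" by (simp add: Q2_def zr_def)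

lemma pexp_sw: "pexp sw zr = -1"
proof -
  have z: "cat [False] zr = zr" by (auto simp: cat_def zr_def fun_eq_iff)
  have iv: "inv_into UNIV sw zr = cat [True] zr" using V_inv_cat[OF sw_V sw_locp(1), of zr] z by simp
  have sl: "log2_slope sw (cat [True] zr) = 0" using slope_eq[OF sw_V _ sw_locp(1)] by simp
  have d0: "dyadic zr = 0" by (simp add: dyadic_def zr_def)
  have s1: "{n. cat [True] zr n} = {0}" by (auto simp: cat_def zr_def)
  have "nu (dyadic (cat [] (cat [True] zr))) = - int (length ([]::bool list) + Suc (Max {n. cat [True] zr n}))"
    by (rule nu_dyadic_cat) (auto simp: s1)
  then have n1: "nu (dyadic (cat [True] zr)) = -1" using s1 by simp
  show ?thesis unfolding pexp_def iv sl d0 n1 nu_zero by simp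
qed

context group begin

lemma center_carrier: "z \<in> center G \<Longrightarrow> z \<in> carrier G" by (simp add: center_def)
lemma center_comm: "z \<in> center G \<Longrightarrow> g \<in> carrier G \<Longrightarrow> z \<otimes> g = g \<otimes> z" by (simp add: center_def)

lemma center_inv: assumes "z \<in> center G" shows "inv z \<in> center G"
proof -
  have z: "z \<in> carrier G" using assms center_carrier by blast
  { fix g assume g: "g \<in> carrier G"
    have e: "z \<otimes> g = g \<otimes> z" using center_comm assms g by blast
    have "inv z \<otimes> g = inv z \<otimes> g \<otimes> (z \<otimes> inv z)" using z g by simp
    also have "\<dots> = inv z \<otimes> (g \<otimes> z) \<otimes> inv z" using z g by (simp add: m_assoc)
    also have "\<dots> = inv z \<otimes> (z \<otimes> g) \<otimes> inv z" using e by simp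
    also have "\<dots> = g \<otimes> inv z" using z g by (simp add: m_assoc[symmetric])
    finally have "inv z \<otimes> g = g \<otimes> inv z" . }
  then show ?thesis using z by (simp add: center_def)
qed

lemma center_nat_pow: assumes "z \<in> center G" shows "z [^] (n::nat) \<in> center G"
  using assms group_commutes_pow[of z] center_carrier[OF assms] by (auto simp: center_def)

lemma center_int_pow: assumes "z \<in> center G" shows "z [^] (k::int) \<in> center G"
proof -
  have e: "z [^] k = (if k < 0 then inv (z [^] nat (- k)) else z [^] nat k)" by (rule int_pow_def2)
  show ?thesis
  proof (cases "k < 0")
    case True
    then have "z [^] k = inv (z [^] nat (- k))" using e by presburger
    then show ?thesis using center_inv[OF center_nat_pow[OF assms]] by metis
  next
    case False
    then have "z [^] k = z [^] nat k" using e by presburger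
    then show ?thesis using center_nat_pow[OF assms] by metis
  qed
qed

lemma cocyc_center: "\<zeta> \<in> center G \<Longrightarrow> cocyc G \<zeta> v x \<in> center G"
  using center_int_pow by (auto simp: cocyc_def center_def)

lemma cocyc_carrier: "\<zeta> \<in> center G \<Longrightarrow> cocyc G \<zeta> v x \<in> carrier G"
  using cocyc_center center_carrier by blast

lemma cocyc_dsum: assumes "\<zeta> \<in> center G" "v \<in> thompsonV" shows "cocyc G \<zeta> v \<in> dsumQ2 G (center G)"
proof -
  have "{x. cocyc G \<zeta> v x \<noteq> \<one>} \<subseteq> {x \<in> Q2. pexp v x \<noteq> 0}" by (auto simp: cocyc_def)
  then have "finite {x. cocyc G \<zeta> v x \<noteq> \<one>}" using pexp_finite[OF assms(2)] finite_subset by blast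
  then show ?thesis using cocyc_center[OF assms(1)] by (auto simp: dsumQ2_def cocyc_def)
qed

lemma cocyc_comp: assumes "\<zeta> \<in> center G" "v \<in> thompsonV" "w \<in> thompsonV"
  shows "cocyc G \<zeta> (v \<circ> w) x = cocyc G \<zeta> v x \<otimes> cocyc G \<zeta> w (vinv v x)"
proof (cases "x \<in> Q2")
  case True
  then have "vinv v x \<in> Q2" using V_inv_Q2[OF assms(2)] by simp
  then show ?thesis using True center_carrier[OF assms(1)]
    by (simp add: cocyc_def pexp_comp[OF assms(2,3)] int_pow_mult)
next
  case False
  then have "vinv v x \<notin> Q2" using V_inv_Q2[OF assms(2)] by simp
  then show ?thesis using False by (simp add: cocyc_def)
qed

lemma cocyc_mult: assumes "\<zeta> \<in> center G" "\<eta> \<in> center G"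
  shows "cocyc G (\<zeta> \<otimes> \<eta>) v x = cocyc G \<zeta> v x \<otimes> cocyc G \<eta> v x"
  using int_pow_mult_distrib[of \<zeta> \<eta>] assms center_carrier center_comm[OF assms(1)]
  by (auto simp: cocyc_def)

lemma semidir_carrier: "carrier (semidir G) = dsumQ2 G (carrier G) \<times> thompsonV"
  by (simp add: semidir_def)

lemma semidir_mult: "g \<otimes>\<^bsub>semidir G\<^esub> h = ((\<lambda>x. fst g x \<otimes> fst h (vinv (snd g) x)), snd g \<circ> snd h)"
  by (simp add: semidir_def)

lemma dsum_mult_closed: assumes a: "a \<in> dsumQ2 G (carrier G)" and b: "b \<in> dsumQ2 G (carrier G)"
  and v: "v \<in> thompsonV"
  shows "(\<lambda>x. a x \<otimes> b (vinv v x)) \<in> dsumQ2 G (carrier G)"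
proof -
  have "{x. a x \<otimes> b (vinv v x) \<noteq> \<one>} \<subseteq> {x. a x \<noteq> \<one>} \<union> v ` {x. b x \<noteq> \<one>}"
  proof
    fix x assume "x \<in> {x. a x \<otimes> b (vinv v x) \<noteq> \<one>}"
    then have "a x \<noteq> \<one> \<or> b (vinv v x) \<noteq> \<one>" by auto
    moreover have "x = v (vinv v x)" using V_surj[OF v] by (simp add: f_inv_into_f)
    ultimately show "x \<in> {x. a x \<noteq> \<one>} \<union> v ` {x. b x \<noteq> \<one>}" by blast
  qed
  moreover have "finite ({x. a x \<noteq> \<one>} \<union> v ` {x. b x \<noteq> \<one>})" using a b by (simp add: dsumQ2_def)
  ultimately have "finite {x. a x \<otimes> b (vinv v x) \<noteq> \<one>}" using finite_subset by blast
  moreover have "\<And>x. x \<notin> Q2 \<Longrightarrow> a x \<otimes> b (vinv v x) = \<one>"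
    using a b V_inv_Q2[OF v] by (simp add: dsumQ2_def)
  ultimately show ?thesis using a b by (simp add: dsumQ2_def)
qed

lemma dsum_cmult_closed: assumes a: "a \<in> dsumQ2 G (carrier G)" and c: "c \<in> dsumQ2 G (center G)"
  shows "(\<lambda>x. a x \<otimes> c x) \<in> dsumQ2 G (carrier G)" and "(\<lambda>x. a x \<otimes> inv (c x)) \<in> dsumQ2 G (carrier G)"
proof -
  have cc: "\<And>x. c x \<in> carrier G" using c center_carrier by (auto simp: dsumQ2_def)
  have ac: "\<And>x. a x \<in> carrier G" using a by (auto simp: dsumQ2_def)
  have "{x. a x \<otimes> c x \<noteq> \<one>} \<subseteq> {x. a x \<noteq> \<one>} \<union> {x. c x \<noteq> \<one>}" by auto
  moreover have "{x. a x \<otimes> inv (c x) \<noteq> \<one>} \<subseteq> {x. a x \<noteq> \<one>} \<union> {x. c x \<noteq> \<one>}" by auto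
  moreover have "finite ({x. a x \<noteq> \<one>} \<union> {x. c x \<noteq> \<one>})" using a c by (simp add: dsumQ2_def)
  ultimately have f: "finite {x. a x \<otimes> c x \<noteq> \<one>}" "finite {x. a x \<otimes> inv (c x) \<noteq> \<one>}"
    using finite_subset by blast+
  show "(\<lambda>x. a x \<otimes> c x) \<in> dsumQ2 G (carrier G)" using f a c cc ac by (simp add: dsumQ2_def)
  show "(\<lambda>x. a x \<otimes> inv (c x)) \<in> dsumQ2 G (carrier G)" using f a c cc ac by (simp add: dsumQ2_def)
qed

lemma semidir_mult_closed: "g \<in> carrier (semidir G) \<Longrightarrow> h \<in> carrier (semidir G) \<Longrightarrow>
   g \<otimes>\<^bsub>semidir G\<^esub> h \<in> carrier (semidir G)"
  unfolding semidir_mult semidir_carrier using dsum_mult_closed V_comp by auto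

lemma Emap_app: "g \<in> carrier (semidir G) \<Longrightarrow> Emap G \<zeta> g = ((\<lambda>x. fst g x \<otimes> cocyc G \<zeta> (snd g) x), snd g)"
  by (simp add: Emap_def)

lemma Emap_closed: "\<zeta> \<in> center G \<Longrightarrow> g \<in> carrier (semidir G) \<Longrightarrow> Emap G \<zeta> g \<in> carrier (semidir G)"
  using dsum_cmult_closed(1) cocyc_dsum by (auto simp: Emap_app semidir_carrier)

lemma Emap_hom: assumes z: "\<zeta> \<in> center G"
  shows "Emap G \<zeta> \<in> hom (semidir G) (semidir G)"
proof (rule homI)
  fix g assume "g \<in> carrier (semidir G)" then show "Emap G \<zeta> g \<in> carrier (semidir G)" using Emap_closed z by blast
next
  fix g h assume g: "g \<in> carrier (semidir G)" and h: "h \<in> carrier (semidir G)"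
  obtain a v where gd: "g = (a, v)" by (cases g)
  obtain b w where hd: "h = (b, w)" by (cases h)
  have a: "a \<in> dsumQ2 G (carrier G)" and v: "v \<in> thompsonV" using g gd semidir_carrier by auto
  have b: "b \<in> dsumQ2 G (carrier G)" and w: "w \<in> thompsonV" using h hd semidir_carrier by auto
  have ac: "\<And>x. a x \<in> carrier G" "\<And>x. b x \<in> carrier G" using a b by (auto simp: dsumQ2_def)
  have gh: "g \<otimes>\<^bsub>semidir G\<^esub> h \<in> carrier (semidir G)" using semidir_mult_closed g h by blast
  have eg: "Emap G \<zeta> g \<in> carrier (semidir G)" "Emap G \<zeta> h \<in> carrier (semidir G)" using Emap_closed z g h by auto
  have "\<And>x. a x \<otimes> b (vinv v x) \<otimes> cocyc G \<zeta> (v \<circ> w) x =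
        a x \<otimes> cocyc G \<zeta> v x \<otimes> (b (vinv v x) \<otimes> cocyc G \<zeta> w (vinv v x))"
  proof -
    fix x
    have c1: "cocyc G \<zeta> v x \<in> carrier G" "cocyc G \<zeta> w (vinv v x) \<in> carrier G"
      using cocyc_carrier z by auto
    have cm: "cocyc G \<zeta> v x \<otimes> b (vinv v x) = b (vinv v x) \<otimes> cocyc G \<zeta> v x"
      using center_comm cocyc_center z ac by blast
    have "a x \<otimes> b (vinv v x) \<otimes> cocyc G \<zeta> (v \<circ> w) x =
          a x \<otimes> (b (vinv v x) \<otimes> cocyc G \<zeta> v x) \<otimes> cocyc G \<zeta> w (vinv v x)"
      using cocyc_comp[OF z v w] c1 ac by (simp add: m_assoc)
    also have "\<dots> = a x \<otimes> (cocyc G \<zeta> v x \<otimes> b (vinv v x)) \<otimes> cocyc G \<zeta> w (vinv v x)" using cm by simp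
    also have "\<dots> = a x \<otimes> cocyc G \<zeta> v x \<otimes> (b (vinv v x) \<otimes> cocyc G \<zeta> w (vinv v x))"
      using c1 ac by (simp add: m_assoc)
    finally show "a x \<otimes> b (vinv v x) \<otimes> cocyc G \<zeta> (v \<circ> w) x =
        a x \<otimes> cocyc G \<zeta> v x \<otimes> (b (vinv v x) \<otimes> cocyc G \<zeta> w (vinv v x))" .
  qed
  moreover have "g \<otimes>\<^bsub>semidir G\<^esub> h = ((\<lambda>x. a x \<otimes> b (vinv v x)), v \<circ> w)"
    by (simp add: semidir_mult gd hd)
  moreover have "Emap G \<zeta> g = ((\<lambda>x. a x \<otimes> cocyc G \<zeta> v x), v)" using Emap_app[OF g] gd by simp
  moreover have "Emap G \<zeta> h = ((\<lambda>x. b x \<otimes> cocyc G \<zeta> w x), w)" using Emap_app[OF h] hd by simp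
  ultimately show "Emap G \<zeta> (g \<otimes>\<^bsub>semidir G\<^esub> h) = Emap G \<zeta> g \<otimes>\<^bsub>semidir G\<^esub> Emap G \<zeta> h"
    using Emap_app[OF gh] by (simp add: semidir_mult)
qed

lemma Emap_bij: assumes z: "\<zeta> \<in> center G"
  shows "bij_betw (Emap G \<zeta>) (carrier (semidir G)) (carrier (semidir G))"
proof (rule bij_betw_imageI)
  show "inj_on (Emap G \<zeta>) (carrier (semidir G))"
  proof (rule inj_onI)
    fix g h assume g: "g \<in> carrier (semidir G)" and h: "h \<in> carrier (semidir G)"
      and e: "Emap G \<zeta> g = Emap G \<zeta> h"
    have ac: "\<And>x. fst g x \<in> carrier G" "\<And>x. fst h x \<in> carrier G" using g h by (auto simp: semidir_carrier dsumQ2_def)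
    have s: "snd g = snd h" using e unfolding Emap_app[OF g] Emap_app[OF h] by simp
    have "(\<lambda>x. fst g x \<otimes> cocyc G \<zeta> (snd g) x) = (\<lambda>x. fst h x \<otimes> cocyc G \<zeta> (snd h) x)"
    proof -
      have "fst (Emap G \<zeta> g) = fst (Emap G \<zeta> h)" using e by simp
      then show ?thesis unfolding Emap_app[OF g] Emap_app[OF h] by (simp only: fst_conv)
    qed
    then have "\<And>x. fst g x \<otimes> cocyc G \<zeta> (snd g) x = fst h x \<otimes> cocyc G \<zeta> (snd g) x"
      using s by metis
    then have "\<And>x. fst g x = fst h x" using ac cocyc_carrier[OF z] r_cancel by blast
    then show "g = h" using s by (simp add: prod_eq_iff fun_eq_iff)
  qed
next
  show "Emap G \<zeta> ` carrier (semidir G) = carrier (semidir G)"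
  proof (intro equalityI subsetI)
    fix g assume "g \<in> Emap G \<zeta> ` carrier (semidir G)" then show "g \<in> carrier (semidir G)"
      using Emap_closed z by blast
  next
    fix g assume g: "g \<in> carrier (semidir G)"
    obtain b v where gd: "g = (b, v)" by (cases g)
    have b: "b \<in> dsumQ2 G (carrier G)" and v: "v \<in> thompsonV" using g gd semidir_carrier by auto
    have bc: "\<And>x. b x \<in> carrier G" using b by (auto simp: dsumQ2_def)
    define h where "h = ((\<lambda>x. b x \<otimes> inv (cocyc G \<zeta> v x)), v)"
    have h: "h \<in> carrier (semidir G)" unfolding h_def semidir_carrier
      using dsum_cmult_closed(2)[OF b cocyc_dsum[OF z v]] v by simp
    have "Emap G \<zeta> h = ((\<lambda>x. fst h x \<otimes> cocyc G \<zeta> (snd h) x), snd h)" by (rule Emap_app[OF h])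
    also have "\<dots> = g" unfolding h_def gd
      using bc cocyc_carrier[OF z] by (simp add: m_assoc fun_eq_iff)
    finally have "Emap G \<zeta> h = g" .
    then show "g \<in> Emap G \<zeta> ` carrier (semidir G)" using h by blast
  qed
qed

lemma Emap_auto: "\<zeta> \<in> center G \<Longrightarrow> Emap G \<zeta> \<in> auto (semidir G)"
  unfolding auto_def Bij_def using Emap_hom Emap_bij by (simp add: Emap_def)

lemma Emap_AutoGroup: "Emap G \<in> hom (G\<lparr>carrier := center G\<rparr>) (AutoGroup (semidir G))"
proof (rule homI)
  fix z assume "z \<in> carrier (G\<lparr>carrier := center G\<rparr>)"
  then show "Emap G z \<in> carrier (AutoGroup (semidir G))"
    using Emap_auto by (simp add: AutoGroup_def BijGroup_def)
next
  fix z e assume "z \<in> carrier (G\<lparr>carrier := center G\<rparr>)" "e \<in> carrier (G\<lparr>carrier := center G\<rparr>)"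
  then have z: "z \<in> center G" and e: "e \<in> center G" by auto
  have bz: "Emap G z \<in> Bij (carrier (semidir G))" and be: "Emap G e \<in> Bij (carrier (semidir G))"
    using Emap_auto z e by (auto simp: auto_def)
  have "Emap G (z \<otimes> e) = compose (carrier (semidir G)) (Emap G z) (Emap G e)"
  proof (rule ext)
    fix g show "Emap G (z \<otimes> e) g = compose (carrier (semidir G)) (Emap G z) (Emap G e) g"
    proof (cases "g \<in> carrier (semidir G)")
      case False then show ?thesis by (simp add: Emap_def compose_def)
    next
      case True
      have ac: "\<And>x. fst g x \<in> carrier G" using True by (auto simp: semidir_carrier dsumQ2_def)
      have "Emap G z (Emap G e g) = ((\<lambda>x. fst g x \<otimes> cocyc G e (snd g) x \<otimes> cocyc G z (snd g) x), snd g)"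
        using Emap_app[OF Emap_closed[OF e True]] Emap_app[OF True] by simp
      also have "\<dots> = ((\<lambda>x. fst g x \<otimes> cocyc G (z \<otimes> e) (snd g) x), snd g)"
        using cocyc_mult[OF z e] ac cocyc_carrier z e center_comm[OF cocyc_center[OF z]]
        by (simp add: m_assoc fun_eq_iff)
      also have "\<dots> = Emap G (z \<otimes> e) g" using Emap_app[OF True] by simp
      finally show ?thesis using True by (simp add: compose_def)
    qed
  qed
  then show "Emap G (z \<otimes>\<^bsub>G\<lparr>carrier := center G\<rparr>\<^esub> e) = Emap G z \<otimes>\<^bsub>AutoGroup (semidir G)\<^esub> Emap G e"
    using bz be by (simp add: AutoGroup_def BijGroup_def)
qed

lemma Emap_inj: "inj_on (Emap G) (center G)"
proof (rule inj_onI)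
  fix z e assume z: "z \<in> center G" and e: "e \<in> center G" and eq: "Emap G z = Emap G e"
  define g where "g = ((\<lambda>_::cantor. \<one>), sw)"
  have g: "g \<in> carrier (semidir G)" unfolding g_def semidir_carrier using sw_V
    by (simp add: dsumQ2_def)
  have "\<And>y. y \<in> center G \<Longrightarrow> fst (Emap G y g) zr = inv y"
  proof -
    fix y assume y: "y \<in> center G"
    then have yc: "y \<in> carrier G" by (rule center_carrier)
    have "fst (Emap G y g) zr = \<one> \<otimes> cocyc G y sw zr" using Emap_app[OF g] by (simp add: g_def)
    also have "\<dots> = y [^] (-1::int)" using zr_Q2 pexp_sw yc by (simp add: cocyc_def)
    also have "\<dots> = inv y" using yc by (simp add: int_pow_neg)
    finally show "fst (Emap G y g) zr = inv y" .
  qed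
  then have "inv z = inv e" using eq z e by metis
  then show "z = e" using z e center_carrier by (metis inv_inv)
qed

end


theorem mainTheorem13:
  fixes \<Gamma> :: "('g, 'b) monoid_scheme"
  assumes "group \<Gamma>"
  shows "(\<forall>\<zeta> \<in> center \<Gamma>. \<forall>v \<in> thompsonV. cocyc \<Gamma> \<zeta> v \<in> dsumQ2 \<Gamma> (center \<Gamma>))
       \<and> (\<forall>\<zeta> \<in> center \<Gamma>. \<forall>v \<in> thompsonV. \<forall>w \<in> thompsonV. \<forall>x \<in> Q2.
             cocyc \<Gamma> \<zeta> (v \<circ> w) x = cocyc \<Gamma> \<zeta> v x \<otimes>\<^bsub>\<Gamma>\<^esub> cocyc \<Gamma> \<zeta> w (inv_into UNIV v x))
       \<and> (\<forall>\<zeta> \<in> center \<Gamma>. Emap \<Gamma> \<zeta> \<in> auto (semidir \<Gamma>))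
       \<and> Emap \<Gamma> \<in> hom (\<Gamma>\<lparr>carrier := center \<Gamma>\<rparr>) (AutoGroup (semidir \<Gamma>))
       \<and> inj_on (Emap \<Gamma>) (center \<Gamma>)"
proof -
  interpret group \<Gamma> by (rule assms)
  show ?thesis
    using cocyc_dsum cocyc_comp Emap_auto Emap_AutoGroup Emap_inj by blast
qed

end
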